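(* Let $n\ge 1$ and let $\pi=\pi_1\pi_2\cdots\pi_n\in S_n$ be a permutation of $\{1,\dots,n\}$ (so $\pi_i=\pi(i)$). Let $$M=\{\pi_j-i \;:\; 1\le i<j\le n,\ \pi_i>\pi_j\}$$ and let $m=\#M$ be the number of distinct elements of $M$. Then there exist at most $m$ permutations $\rho^1,\rho^2,\dots$ of bandwidth $1$ (i.e. $|\rho^j_i-i|\le 1$ for all $i$) such that $\pi=\rho^1\rho^2\cdots$ (product in $S_n$; when $m=0$, $\pi$ is the identity, the empty product).
   Context: A permutation $\rho\in S_n$ has bandwidth $w$ if $|\rho_i-i|\le w$ for all $i$; equivalently its permutation matrix $P$ (with $P_{i,\rho_i}=1$ and all other entries $0$) satisfies $P_{i,j}=0$ whenever $|i-j|>w$. *)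

theory Defs
  imports "HOL-Combinatorics.Permutations"
begin

definition has_bandwidth :: "nat \<Rightarrow> nat \<Rightarrow> (nat \<Rightarrow> nat) \<Rightarrow> bool" where
  "has_bandwidth n w \<rho> \<longleftrightarrow> \<rho> permutes {1..n} \<and> (\<forall>i\<in>{1..n}. \<bar>int (\<rho> i) - int i\<bar> \<le> int w)"

definition inv_set :: "nat \<Rightarrow> (nat \<Rightarrow> nat) \<Rightarrow> int set" where
  "inv_set n \<pi> = {int (\<pi> j) - int i | i j. 1 \<le> i \<and> i < j \<and> j \<le> n \<and> \<pi> i > \<pi> j}"

end

theory Submission
  imports Defs
begin

definition KK :: "(nat \<Rightarrow> nat) \<Rightarrow> int \<Rightarrow> nat \<Rightarrow> int" where
  "KK ip d x = min (int x) (int (ip x) + d)"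

definition lt :: "(nat \<Rightarrow> nat) \<Rightarrow> int \<Rightarrow> nat \<Rightarrow> nat \<Rightarrow> bool" where
  "lt ip d y x \<longleftrightarrow> KK ip d y < KK ip d x \<or> (KK ip d y = KK ip d x \<and> ip y < ip x)"

definition rk :: "nat \<Rightarrow> (nat \<Rightarrow> nat) \<Rightarrow> int \<Rightarrow> nat \<Rightarrow> nat" where
  "rk n ip d x = (if x \<in> {1..n} then card {y\<in>{1..n}. lt ip d y x} + 1 else x)"

definition sg :: "nat \<Rightarrow> (nat \<Rightarrow> nat) \<Rightarrow> int \<Rightarrow> nat \<Rightarrow> nat" where
  "sg n ip d = rk n ip (d+1) \<circ> inv (rk n ip d)"

lemma lt_trans: "lt ip d x y \<Longrightarrow> lt ip d y z \<Longrightarrow> lt ip d x z"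
  unfolding lt_def by auto

lemma lt_irrefl: "\<not> lt ip d x x"
  unfolding lt_def by auto

lemma lt_switch:
  assumes "lt ip d y x \<noteq> lt ip (d+1) y x" "ip x \<noteq> ip y" "x \<noteq> y"
  shows "(ip y < ip x \<and> x < y \<and> int x - int (ip y) = d) \<or> (ip x < ip y \<and> y < x \<and> int y - int (ip x) = d)"
proof -
  have "int (ip x) \<noteq> int (ip y)" "int x \<noteq> int y" using assms(2,3) by auto
  then show ?thesis using assms(1) unfolding lt_def KK_def min_def
    by (smt (verit) of_nat_less_iff)
qed

lemma card_rank_perm:
  assumes "g permutes {1..n}" "x \<in> {1..n}"
  shows "card {y\<in>{1..n}. g y < g x} = g x - 1"
proof -
  have inj: "inj_on g {y\<in>{1..n}. g y < g x}"
    using permutes_inj_on[OF assms(1)] by blast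
  have "g ` {y\<in>{1..n}. g y < g x} = {1..<g x}"
  proof
    show "g ` {y\<in>{1..n}. g y < g x} \<subseteq> {1..<g x}"
      using permutes_in_image[OF assms(1)] by fastforce
    show "{1..<g x} \<subseteq> g ` {y\<in>{1..n}. g y < g x}"
    proof
      fix j assume j: "j \<in> {1..<g x}"
      have gx: "g x \<in> {1..n}" using permutes_in_image[OF assms(1)] assms(2) by blast
      have "j \<in> {1..n}" using j gx by auto
      then have "inv g j \<in> {1..n}" using permutes_in_image[OF permutes_inv[OF assms(1)]] by blast
      moreover have "g (inv g j) = j" using permutes_inverses(1)[OF assms(1)] by blast
      ultimately show "j \<in> g ` {y\<in>{1..n}. g y < g x}" using j by (metis (mono_tags, lifting) atLeastLessThan_iff image_eqI mem_Collect_eq)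
    qed
  qed
  then have "card {y\<in>{1..n}. g y < g x} = card {1..<g x}"
    using card_image[OF inj] by metis
  then show ?thesis by simp
qed

context
  fixes n :: nat and ip :: "nat \<Rightarrow> nat"
  assumes ip: "ip permutes {1..n}"
begin

lemma ip_inj: "x \<in> {1..n} \<Longrightarrow> y \<in> {1..n} \<Longrightarrow> ip x = ip y \<Longrightarrow> x = y"
  using permutes_inj_on[OF ip] by (meson inj_onD)

lemma lt_total: "x \<in> {1..n} \<Longrightarrow> y \<in> {1..n} \<Longrightarrow> x \<noteq> y \<Longrightarrow> lt ip d x y \<or> lt ip d y x"
proof -
  assume a: "x \<in> {1..n}" "y \<in> {1..n}" "x \<noteq> y"
  then have "ip x \<noteq> ip y" using ip_inj by blast
  then have "ip x < ip y \<or> ip y < ip x" by linarith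
  then show ?thesis unfolding lt_def by (metis linorder_less_linear)
qed

lemma rk_mem: "x \<in> {1..n} \<Longrightarrow> rk n ip d x \<in> {1..n}"
proof -
  assume x: "x \<in> {1..n}"
  have "{y\<in>{1..n}. lt ip d y x} \<subseteq> {1..n} - {x}" using lt_irrefl by auto
  then have "card {y\<in>{1..n}. lt ip d y x} \<le> card ({1..n} - {x})" by (intro card_mono) auto
  also have "\<dots> = n - 1" using x by simp
  finally show ?thesis using x unfolding rk_def by auto
qed

lemma rk_inj: "inj_on (rk n ip d) {1..n}"
proof
  fix x y assume x: "x \<in> {1..n}" and y: "y \<in> {1..n}" and eq: "rk n ip d x = rk n ip d y"
  show "x = y"
  proof (rule ccontr)
    assume ne: "x \<noteq> y"
    have less: "card {z\<in>{1..n}. lt ip d z a} < card {z\<in>{1..n}. lt ip d z b}"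
      if "a \<in> {1..n}" "b \<in> {1..n}" "lt ip d a b" for a b
    proof (rule psubset_card_mono)
      show "finite {z\<in>{1..n}. lt ip d z b}" by simp
      show "{z\<in>{1..n}. lt ip d z a} \<subset> {z\<in>{1..n}. lt ip d z b}"
        using that lt_trans lt_irrefl by blast
    qed
    from lt_total[OF x y ne] show False
      using less[OF x y] less[OF y x] eq x y unfolding rk_def by auto
  qed
qed

lemma rk_perm: "rk n ip d permutes {1..n}"
proof (rule bij_imp_permutes)
  have "rk n ip d ` {1..n} = {1..n}"
    by (rule endo_inj_surj) (use rk_mem rk_inj in auto)
  then show "bij_betw (rk n ip d) {1..n} {1..n}"
    using rk_inj by (simp add: bij_betw_def)
  show "\<And>x. x \<notin> {1..n} \<Longrightarrow> rk n ip d x = x" unfolding rk_def by auto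
qed

definition CC where "CC d x = {y\<in>{1..n}. y \<noteq> x \<and> lt ip d y x \<noteq> lt ip (d+1) y x}"

lemma CC_le1:
  assumes x: "x \<in> {1..n}"
  shows "card (CC d x) \<le> 1"
proof -
  have sw: "(ip y < ip x \<and> x < y \<and> int x - int (ip y) = d) \<or> (ip x < ip y \<and> y < x \<and> int y - int (ip x) = d)"
    if "y \<in> CC d x" for y
    using that x ip_inj lt_switch unfolding CC_def by blast
  have "\<forall>a\<in>CC d x. \<forall>b\<in>CC d x. a = b"
  proof (intro ballI)
    fix a b assume a: "a \<in> CC d x" and b: "b \<in> CC d x"
    have ab: "a \<in> {1..n}" "b \<in> {1..n}" using a b unfolding CC_def by auto
    from sw[OF a] sw[OF b] show "a = b"
    proof (elim disjE)
      assume "ip a < ip x \<and> x < a \<and> int x - int (ip a) = d" "ip b < ip x \<and> x < b \<and> int x - int (ip b) = d"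
      then have "ip a = ip b" by linarith
      then show "a = b" using ip_inj ab by blast
    qed linarith+
  qed
  then show ?thesis using card_le_Suc0_iff_eq[of "CC d x"] unfolding CC_def by auto
qed

lemma rk_band:
  assumes x: "x \<in> {1..n}"
  shows "\<bar>int (rk n ip (d+1) x) - int (rk n ip d x)\<bar> \<le> 1"
proof -
  define A where "A = {y\<in>{1..n}. lt ip (d+1) y x}"
  define B where "B = {y\<in>{1..n}. lt ip d y x}"
  have AB: "A - B \<subseteq> CC d x" "B - A \<subseteq> CC d x"
    unfolding A_def B_def CC_def using lt_irrefl by auto
  have c: "card (CC d x) \<le> 1" using CC_le1[OF x] .
  have fin: "finite (CC d x)" unfolding CC_def by simp
  have "card A \<le> card B + card (A - B)"
  proof -
    have "card A \<le> card (B \<union> (A - B))" by (rule card_mono) (auto simp: A_def B_def)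
    also have "\<dots> \<le> card B + card (A - B)" by (rule card_Un_le)
    finally show ?thesis .
  qed
  moreover have "card B \<le> card A + card (B - A)"
  proof -
    have "card B \<le> card (A \<union> (B - A))" by (rule card_mono) (auto simp: A_def B_def)
    also have "\<dots> \<le> card A + card (B - A)" by (rule card_Un_le)
    finally show ?thesis .
  qed
  moreover have "card (A - B) \<le> 1" "card (B - A) \<le> 1"
    using card_mono[OF fin AB(1)] card_mono[OF fin AB(2)] c by auto
  ultimately show ?thesis using x unfolding rk_def A_def B_def by auto
qed

lemma rk_low:
  assumes "d \<le> 1 - int n"
  shows "rk n ip d = ip"
proof
  fix x show "rk n ip d x = ip x"
  proof (cases "x \<in> {1..n}")
    case True
    have "{y\<in>{1..n}. lt ip d y x} = {y\<in>{1..n}. ip y < ip x}"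
    proof -
      have "KK ip d z = int (ip z) + d" if "z \<in> {1..n}" for z
      proof -
        have "ip z \<in> {1..n}" using permutes_in_image[OF ip] that by blast
        then show ?thesis using assms that unfolding KK_def by auto
      qed
      then show ?thesis using True unfolding lt_def by auto
    qed
    then show ?thesis using True card_rank_perm[OF ip True] permutes_in_image[OF ip, of x]
      unfolding rk_def by auto
  next
    case False
    then show ?thesis unfolding rk_def using permutes_not_in[OF ip] by auto
  qed
qed

lemma rk_high:
  assumes "d \<ge> int n"
  shows "rk n ip d = id"
proof
  fix x show "rk n ip d x = id x"
  proof (cases "x \<in> {1..n}")
    case True
    have "{y\<in>{1..n}. lt ip d y x} = {y\<in>{1..n}. id y < id x}"
    proof -
      have "KK ip d z = int z" if "z \<in> {1..n}" for z
      proof -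
        have "ip z \<in> {1..n}" using permutes_in_image[OF ip] that by blast
        then show ?thesis using assms that unfolding KK_def by auto
      qed
      then show ?thesis using True unfolding lt_def by auto
    qed
    then show ?thesis using True card_rank_perm[OF permutes_id True]
      unfolding rk_def by auto
  next
    case False
    then show ?thesis unfolding rk_def by auto
  qed
qed

lemma sg_rk: "sg n ip d \<circ> rk n ip d = rk n ip (d+1)"
  unfolding sg_def using permutes_inv_o(2)[OF rk_perm, of d] by (metis comp_assoc comp_id)

lemma sg_band: "has_bandwidth n 1 (sg n ip d)"
  unfolding has_bandwidth_def
proof (intro conjI ballI)
  show "sg n ip d permutes {1..n}" unfolding sg_def
    by (intro permutes_compose permutes_inv rk_perm)
  fix k assume k: "k \<in> {1..n}"
  define x where "x = inv (rk n ip d) k"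
  have x: "x \<in> {1..n}" unfolding x_def using permutes_in_image[OF permutes_inv[OF rk_perm]] k by blast
  have "rk n ip d x = k" unfolding x_def using permutes_inverses(1)[OF rk_perm] by blast
  moreover have "sg n ip d k = rk n ip (d+1) x" unfolding sg_def x_def by simp
  ultimately show "\<bar>int (sg n ip d k) - int k\<bar> \<le> int 1" using rk_band[OF x, of d] by simp
qed

lemma sg_nochange:
  assumes "d \<notin> inv_set n (inv ip)"
  shows "sg n ip d = id"
proof -
  have ii: "inv ip (ip z) = z" for z using permutes_inverses(2)[OF ip] .
  have "rk n ip (d+1) = rk n ip d"
  proof
    fix x show "rk n ip (d+1) x = rk n ip d x"
    proof (cases "x \<in> {1..n}")
      case True
      have "lt ip d y x = lt ip (d+1) y x" if y: "y \<in> {1..n}" for y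
      proof (rule ccontr)
        assume ne: "lt ip d y x \<noteq> lt ip (d+1) y x"
        then have yx: "y \<noteq> x" using lt_irrefl by auto
        then have "ip x \<noteq> ip y" using ip_inj True y by metis
        from lt_switch[OF ne this yx[symmetric]]
        have "d \<in> inv_set n (inv ip)"
        proof (elim disjE)
          assume h: "ip y < ip x \<and> x < y \<and> int x - int (ip y) = d"
          have "ip y \<in> {1..n}" "ip x \<in> {1..n}" using permutes_in_image[OF ip] y True by auto
          then show ?thesis unfolding inv_set_def using h ii[of x] ii[of y]
            by (intro CollectI exI[of _ "ip y"] exI[of _ "ip x"]) auto
        next
          assume h: "ip x < ip y \<and> y < x \<and> int y - int (ip x) = d"
          have "ip y \<in> {1..n}" "ip x \<in> {1..n}" using permutes_in_image[OF ip] y True by auto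
          then show ?thesis unfolding inv_set_def using h ii[of x] ii[of y]
            by (intro CollectI exI[of _ "ip x"] exI[of _ "ip y"]) auto
        qed
        then show False using assms by blast
      qed
      then have "{y\<in>{1..n}. lt ip (d+1) y x} = {y\<in>{1..n}. lt ip d y x}" by auto
      then show ?thesis unfolding rk_def by simp
    next
      case False then show ?thesis unfolding rk_def by auto
    qed
  qed
  then show ?thesis unfolding sg_def using permutes_inv_o(1)[OF rk_perm] by simp
qed

end

lemma foldr_filter_id: "foldr (\<circ>) (filter (\<lambda>f. f \<noteq> id) xs) id = foldr (\<circ>) xs id"
  by (induction xs) auto

theorem theorem1p1:
  fixes n :: nat and \<pi> :: "nat \<Rightarrow> nat"
  assumes "n \<ge> 1" and "\<pi> permutes {1..n}"
  shows "\<exists>\<rho>s. length \<rho>s \<le> card (inv_set n \<pi>)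
           \<and> (\<forall>\<rho>\<in>set \<rho>s. has_bandwidth n 1 \<rho>)
           \<and> \<pi> = foldr (\<circ>) \<rho>s id"
proof -
  define ip where "ip = inv \<pi>"
  have ip: "ip permutes {1..n}" unfolding ip_def using permutes_inv[OF assms(2)] .
  have iip: "inv ip = \<pi>" unfolding ip_def using inv_inv_eq[OF permutes_bij[OF assms(2)]] .
  define d0 :: int where "d0 = 1 - int n"
  define \<sigma> where "\<sigma> k = sg n ip (d0 + int k)" for k
  define L where "L t = rev (map \<sigma> [0..<t])" for t
  have fold: "foldr (\<circ>) (L t) id \<circ> rk n ip d0 = rk n ip (d0 + int t)" for t
  proof (induction t)
    case 0 then show ?case by (simp add: L_def)
  next
    case (Suc t)
    have "foldr (\<circ>) (L (Suc t)) id \<circ> rk n ip d0 = \<sigma> t \<circ> (foldr (\<circ>) (L t) id \<circ> rk n ip d0)"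
      by (simp add: L_def comp_assoc)
    also have "\<dots> = rk n ip (d0 + int t + 1)" unfolding \<sigma>_def Suc.IH using sg_rk[OF ip, of "d0 + int t"] by simp
    finally show ?case by (metis add.assoc of_nat_Suc add.commute)
  qed
  define T where "T = 2 * n"
  have "foldr (\<circ>) (L T) id \<circ> inv \<pi> = id"
    using fold[of T] rk_low[OF ip, of d0] rk_high[OF ip, of "d0 + int T"]
    by (simp add: d0_def T_def ip_def)
  then have F: "foldr (\<circ>) (L T) id = \<pi>"
    by (metis comp_assoc comp_id id_comp permutes_inv_o(2)[OF assms(2)])
  define \<rho>s where "\<rho>s = filter (\<lambda>f. f \<noteq> id) (L T)"
  have 1: "\<pi> = foldr (\<circ>) \<rho>s id" using F foldr_filter_id unfolding \<rho>s_def by metis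
  have 2: "\<forall>\<rho>\<in>set \<rho>s. has_bandwidth n 1 \<rho>"
    unfolding \<rho>s_def L_def \<sigma>_def using sg_band[OF ip] by auto
  have finM: "finite (inv_set n \<pi>)"
  proof (rule finite_subset)
    show "inv_set n \<pi> \<subseteq> {-int n..int n}"
    proof
      fix v assume "v \<in> inv_set n \<pi>"
      then obtain i j where v: "v = int (\<pi> j) - int i" "1 \<le> i" "i < j" "j \<le> n"
        unfolding inv_set_def by blast
      have "\<pi> j \<in> {1..n}" using permutes_in_image[OF assms(2)] v by auto
      then show "v \<in> {-int n..int n}" using v by auto
    qed
  qed simp
  have "length \<rho>s = length (filter (\<lambda>k. \<sigma> k \<noteq> id) [0..<T])"
    unfolding \<rho>s_def L_def by (simp add: rev_filter[symmetric] filter_map o_def)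
  also have "\<dots> = card {k. k < T \<and> \<sigma> k \<noteq> id}"
    by (simp add: length_filter_conv_card cong: conj_cong)
  also have "\<dots> \<le> card (inv_set n \<pi>)"
  proof (rule card_inj_on_le[where f = "\<lambda>k. d0 + int k"])
    show "inj_on (\<lambda>k. d0 + int k) {k. k < T \<and> \<sigma> k \<noteq> id}" by (auto intro: inj_onI)
    show "(\<lambda>k. d0 + int k) ` {k. k < T \<and> \<sigma> k \<noteq> id} \<subseteq> inv_set n \<pi>"
      using sg_nochange[OF ip] iip unfolding \<sigma>_def by blast
    show "finite (inv_set n \<pi>)" by (rule finM)
  qed
  finally show ?thesis using 1 2 by blast
qed

end
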